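(* Let $\lambda\in(\frac16,\frac56)$ and $x\in[0,1]\setminus\mathcal E$. For $n\ge1$ let $m^+_n$ be the maximum of the absolute values of the slopes of $F^\lambda_n$. If $m_n(x)\neq0$, then $\sqrt{36\lambda^2-1}\le|m_n(x)|\le m^+_n$, and $m^+_n\asymp(6\lambda+1)^n$, i.e. there are constants $0<c\le C$ depending only on $\lambda$ with $c(6\lambda+1)^n\le m^+_n\le C(6\lambda+1)^n$ for all $n\ge1$. Moreover, if $\lambda>\frac13$, then for every $x\in[0,1]\setminus\widetilde{\mathcal E}$, $\lim_{n\to\infty}|m_n(x)|=+\infty$.
   Context: Construction: $F^\lambda_0\equiv0$ on $[0,1]$ (one interval of generation $0$). Given $F^\lambda_n$ with its $4^n$ closed intervals of generation $n$ (covering $[0,1]$, disjoint interiors, $F^\lambda_n$ affine on each), on each interval $[a,b]$ of generation $n$, with $\ell=b-a$ and slope $m$, $F^\lambda_{n+1}$ coincides with $F^\lambda_n$ at $a,a+\ell/3,a+2\ell/3,b$, equals $F^\lambda_n(a+\ell/2)+\lambda\ell\sqrt{1+m^2}$ at $a+\ell/2$, and is affine on $[a,a+\ell/3],[a+\ell/3,a+\ell/2],[a+\ell/2,a+2\ell/3],[a+2\ell/3,b]$. Dynamics: $T(x)=3x$ on $[0,\frac13)$, $6x-2$ on $[\frac13,\frac12)$, $4-6x$ on $[\frac12,\frac23)$, $3x-2$ on $[\frac23,1]$; $U(x)=0,1,2,3$ on these intervals respectively; $u_n(x)=U(T^nx)$; $\beta_{1,2}(x,n)=\#\{k<n:u_k(x)\in\{1,2\}\}$.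 $\mathcal E$ is the set of $x$ whose digit sequence $(u_n(x))$ is eventually constantly $0$ or eventually constantly $3$; $\widetilde{\mathcal E}\supset\mathcal E$ is the set of $x$ for which $(\beta_{1,2}(x,n))_n$ is eventually constant. For $x\notin\mathcal E$, $F^\lambda_n$ is differentiable at $x$ and $m_n(x)$ is its slope at $x$. *)

theory Defs
  imports "HOL-Analysis.Analysis"
begin

primrec Ivs :: "nat \<Rightarrow> (real \<times> real) set" where
  "Ivs 0 = {(0, 1)}"
| "Ivs (Suc n) = (\<Union>(a, b)\<in>Ivs n.
     {(a, a + (b - a) / 3), (a + (b - a) / 3, a + (b - a) / 2),
      (a + (b - a) / 2, a + 2 * (b - a) / 3), (a + 2 * (b - a) / 3, b)})"

definition interp :: "real \<Rightarrow> real \<Rightarrow> real \<Rightarrow> real \<Rightarrow> real \<Rightarrow> real" where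
  "interp x0 y0 x1 y1 x = y0 + (y1 - y0) / (x1 - x0) * (x - x0)"

primrec Fl :: "real \<Rightarrow> nat \<Rightarrow> real \<Rightarrow> real" where
  "Fl lam 0 x = 0"
| "Fl lam (Suc n) x =
     (let ab = (SOME p. p \<in> Ivs n \<and> fst p \<le> x \<and> x \<le> snd p);
          a = fst ab; b = snd ab; f = Fl lam n;
          l = b - a; m = (f b - f a) / l;
          p1 = a + l / 3; p2 = a + l / 2; p3 = a + 2 * l / 3;
          y1 = f p1; y2 = f p2 + lam * l * sqrt (1 + m\<^sup>2); y3 = f p3
      in if x \<le> p1 then interp a (f a) p1 y1 x
         else if x \<le> p2 then interp p1 y1 p2 y2 x
         else if x \<le> p3 then interp p2 y2 p3 y3 x
         else interp p3 y3 b (f b) x)"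

definition slope_m :: "real \<Rightarrow> nat \<Rightarrow> real \<Rightarrow> real" where
  "slope_m lam n x = deriv (Fl lam n) x"

definition mplus :: "real \<Rightarrow> nat \<Rightarrow> real" where
  "mplus lam n = Max ((\<lambda>(a, b). \<bar>(Fl lam n b - Fl lam n a) / (b - a)\<bar>) ` Ivs n)"

definition Tmap :: "real \<Rightarrow> real" where
  "Tmap x = (if x < 1/3 then 3 * x else if x < 1/2 then 6 * x - 2
             else if x < 2/3 then 4 - 6 * x else 3 * x - 2)"

definition Umap :: "real \<Rightarrow> nat" where
  "Umap x = (if x < 1/3 then 0 else if x < 1/2 then 1 else if x < 2/3 then 2 else 3)"

definition digit :: "nat \<Rightarrow> real \<Rightarrow> nat" where
  "digit n x = Umap ((Tmap ^^ n) x)"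

definition beta12 :: "real \<Rightarrow> nat \<Rightarrow> nat" where
  "beta12 x n = card {k. k < n \<and> digit k x \<in> {1, 2}}"

definition Eset :: "real set" where
  "Eset = {x. \<exists>N. (\<forall>k\<ge>N. digit k x = 0) \<or> (\<forall>k\<ge>N. digit k x = 3)}"

definition Etilde :: "real set" where
  "Etilde = {x. \<exists>N. \<forall>k\<ge>N. beta12 x k = beta12 x N}"

end

theory Submission
  imports Defs
begin

lemma Ivs_child:
  assumes "(a,b) \<in> Ivs n"
  shows "(a, a+(b-a)/3) \<in> Ivs (Suc n)" "(a+(b-a)/3, a+(b-a)/2) \<in> Ivs (Suc n)"
        "(a+(b-a)/2, a+2*(b-a)/3) \<in> Ivs (Suc n)" "(a+2*(b-a)/3, b) \<in> Ivs (Suc n)"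
  using assms by force+

lemma Ivs_SucE:
  assumes "p \<in> Ivs (Suc n)"
  obtains a b where "(a,b) \<in> Ivs n"
    "p = (a, a+(b-a)/3) \<or> p = (a+(b-a)/3, a+(b-a)/2) \<or> p = (a+(b-a)/2, a+2*(b-a)/3) \<or> p = (a+2*(b-a)/3, b)"
  using assms by auto

lemma Ivs_lt: "(a,b) \<in> Ivs n \<Longrightarrow> a < b"
proof (induction n arbitrary: a b)
  case 0 then show ?case by simp
next
  case (Suc n)
  from Suc.prems obtain A B where "(A,B) \<in> Ivs n"
    "(a,b) = (A, A+(B-A)/3) \<or> (a,b) = (A+(B-A)/3, A+(B-A)/2) \<or> (a,b) = (A+(B-A)/2, A+2*(B-A)/3) \<or> (a,b) = (A+2*(B-A)/3, B)"
    by (rule Ivs_SucE)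
  moreover from Suc.IH[OF this(1)] have "A < B" .
  ultimately show ?case by (auto simp: field_simps)
qed

lemma Ivs_finite: "finite (Ivs n)"
  by (induction n) auto

lemma Ivs_disj:
  "(a,b) \<in> Ivs n \<Longrightarrow> (c,d) \<in> Ivs n \<Longrightarrow> (a,b) \<noteq> (c,d) \<Longrightarrow> a \<le> z \<Longrightarrow> z \<le> b
   \<Longrightarrow> c \<le> z \<Longrightarrow> z \<le> d \<Longrightarrow> z = a \<or> z = b"
proof (induction n arbitrary: a b c d)
  case 0 then show ?case by simp
next
  case (Suc n)
  from Suc.prems(1) obtain A B where AB: "(A,B) \<in> Ivs n"
    "(a,b) = (A, A+(B-A)/3) \<or> (a,b) = (A+(B-A)/3, A+(B-A)/2) \<or> (a,b) = (A+(B-A)/2, A+2*(B-A)/3) \<or> (a,b) = (A+2*(B-A)/3, B)"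
    by (rule Ivs_SucE)
  from Suc.prems(2) obtain C D where CD: "(C,D) \<in> Ivs n"
    "(c,d) = (C, C+(D-C)/3) \<or> (c,d) = (C+(D-C)/3, C+(D-C)/2) \<or> (c,d) = (C+(D-C)/2, C+2*(D-C)/3) \<or> (c,d) = (C+2*(D-C)/3, D)"
    by (rule Ivs_SucE)
  have lt: "A < B" using Ivs_lt[OF AB(1)] .
  have sub: "A \<le> a" "b \<le> B" using AB(2) lt by (auto simp: field_simps)
  have sub2: "C \<le> c" "d \<le> D" using CD(2) Ivs_lt[OF CD(1)] by (auto simp: field_simps)
  show ?case
  proof (cases "(A,B) = (C,D)")
    case True
    then have "C = A" "D = B" by auto
    then show ?thesis using AB(2) CD(2) Suc.prems(3-7) lt by (auto simp: field_simps)
  next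
    case False
    from Suc.IH[OF AB(1) CD(1) False] Suc.prems(4-7) sub sub2
    have "z = A \<or> z = B" by auto
    then show ?thesis using sub Suc.prems(4,5) by auto
  qed
qed


definition Hf :: "real \<Rightarrow> (real \<Rightarrow> real) \<Rightarrow> real \<Rightarrow> real \<Rightarrow> real \<Rightarrow> real" where
  "Hf lam f a b x = (let l = b - a; m = (f b - f a) / l;
          p1 = a + l / 3; p2 = a + l / 2; p3 = a + 2 * l / 3;
          y1 = f p1; y2 = f p2 + lam * l * sqrt (1 + m\<^sup>2); y3 = f p3
      in if x \<le> p1 then interp a (f a) p1 y1 x
         else if x \<le> p2 then interp p1 y1 p2 y2 x
         else if x \<le> p3 then interp p2 y2 p3 y3 x
         else interp p3 y3 b (f b) x)"

lemma Fl_Suc: "Fl lam (Suc n) x = (let ab = (SOME p. p \<in> Ivs n \<and> fst p \<le> x \<and> x \<le> snd p)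
   in Hf lam (Fl lam n) (fst ab) (snd ab) x)"
  by (simp add: Hf_def Let_def)

declare Fl.simps(2)[simp del]

lemma interp_left[simp]: "interp x0 y0 x1 y1 x0 = y0"
  by (simp add: interp_def)
lemma interp_right: "x0 \<noteq> x1 \<Longrightarrow> interp x0 y0 x1 y1 x1 = y1"
  by (simp add: interp_def)

definition "Y2 lam f a b = f (a+(b-a)/2) + lam * (b-a) * sqrt (1 + ((f b - f a)/(b-a))\<^sup>2)"

lemma Hf_p1: "a < b \<Longrightarrow> z \<le> a+(b-a)/3 \<Longrightarrow>
   Hf lam f a b z = interp a (f a) (a+(b-a)/3) (f (a+(b-a)/3)) z"
  by (simp add: Hf_def Let_def)

lemma Hf_p2: "a < b \<Longrightarrow> a+(b-a)/3 \<le> z \<Longrightarrow> z \<le> a+(b-a)/2 \<Longrightarrow>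
   Hf lam f a b z = interp (a+(b-a)/3) (f (a+(b-a)/3)) (a+(b-a)/2) (Y2 lam f a b) z"
  by (cases "z = a+(b-a)/3") (auto simp add: Hf_def Let_def Y2_def interp_right diff_divide_distrib)

lemma Hf_p3: "a < b \<Longrightarrow> a+(b-a)/2 \<le> z \<Longrightarrow> z \<le> a+2*(b-a)/3 \<Longrightarrow>
   Hf lam f a b z = interp (a+(b-a)/2) (Y2 lam f a b) (a+2*(b-a)/3) (f (a+2*(b-a)/3)) z"
  by (cases "z = a+(b-a)/2") (auto simp add: Hf_def Let_def Y2_def interp_right diff_divide_distrib)

lemma Hf_p4: "a < b \<Longrightarrow> a+2*(b-a)/3 \<le> z \<Longrightarrow> z \<le> b \<Longrightarrow>
   Hf lam f a b z = interp (a+2*(b-a)/3) (f (a+2*(b-a)/3)) b (f b) z"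
  by (cases "z = a+2*(b-a)/3") (auto simp add: Hf_def Let_def Y2_def interp_right diff_divide_distrib)

lemma Hf_a: "a < b \<Longrightarrow> Hf lam f a b a = f a"
  by (subst Hf_p1) auto
lemma Hf_b: "a < b \<Longrightarrow> Hf lam f a b b = f b"
  by (subst Hf_p4) (auto simp: interp_right diff_divide_distrib)

lemma Fl_Suc_eq:
  assumes "(a,b) \<in> Ivs n" "a \<le> z" "z \<le> b"
  shows "Fl lam (Suc n) z = Hf lam (Fl lam n) a b z"
proof -
  define cd where "cd = (SOME p. p \<in> Ivs n \<and> fst p \<le> z \<and> z \<le> snd p)"
  have ex: "\<exists>p. p \<in> Ivs n \<and> fst p \<le> z \<and> z \<le> snd p" using assms by force
  have cd: "cd \<in> Ivs n \<and> fst cd \<le> z \<and> z \<le> snd cd"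
    unfolding cd_def using someI_ex[OF ex] .
  obtain c d where cdd: "cd = (c,d)" by (cases cd)
  have Fz: "Fl lam (Suc n) z = Hf lam (Fl lam n) c d z"
    by (simp only: Fl_Suc Let_def cd_def[symmetric] cdd fst_conv snd_conv)
  show ?thesis
  proof (cases "(a,b) = (c,d)")
    case True then show ?thesis using Fz by simp
  next
    case False
    have c: "(c,d) \<in> Ivs n" "c \<le> z" "z \<le> d" using cd cdd by auto
    have "z = a \<or> z = b" using Ivs_disj[OF assms(1) c(1) False assms(2,3) c(2,3)] .
    moreover have "z = c \<or> z = d" using Ivs_disj[OF c(1) assms(1) _ c(2,3) assms(2,3)] False by auto
    ultimately show ?thesis using Fz Hf_a Hf_b Ivs_lt[OF assms(1)] Ivs_lt[OF c(1)] by auto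
  qed
qed

definition sl :: "real \<Rightarrow> nat \<Rightarrow> real \<Rightarrow> real \<Rightarrow> real" where
  "sl lam n a b = (Fl lam n b - Fl lam n a) / (b - a)"

lemma interp_affine: "x0 \<noteq> x1 \<Longrightarrow> interp x0 y0 x1 y1 z =
   interp x0 y0 x1 y1 x0 + (interp x0 y0 x1 y1 x1 - interp x0 y0 x1 y1 x0) / (x1 - x0) * (z - x0)"
  by (simp add: interp_right interp_def)

lemma interp_self:
  assumes "a < b" "\<And>w. a \<le> w \<Longrightarrow> w \<le> b \<Longrightarrow> g w = interp a y0 b y1 w" "a \<le> z" "z \<le> b"
  shows "g z = g a + (g b - g a) / (b - a) * (z - a)"
proof -
  have "g a = y0" using assms(1,2) by simp
  moreover have "g b = y1" using assms(1,2) by (simp add: interp_right)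
  moreover have "g z = interp a y0 b y1 z" using assms by simp
  ultimately show ?thesis by (simp add: interp_def)
qed

lemma Fl_affine:
  assumes "(a,b) \<in> Ivs n" "a \<le> z" "z \<le> b"
  shows "Fl lam n z = Fl lam n a + sl lam n a b * (z - a)"
proof (cases n)
  case 0 then show ?thesis by (simp add: sl_def)
next
  case (Suc k)
  from assms(1) obtain A B where AB: "(A,B) \<in> Ivs k"
    "(a,b) = (A, A+(B-A)/3) \<or> (a,b) = (A+(B-A)/3, A+(B-A)/2) \<or> (a,b) = (A+(B-A)/2, A+2*(B-A)/3) \<or> (a,b) = (A+2*(B-A)/3, B)"
    using Ivs_SucE Suc by blast
  have lt: "A < B" using Ivs_lt[OF AB(1)] .
  have ab: "a < b" using Ivs_lt[OF assms(1)] .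
  have sub: "A \<le> a" "b \<le> B" using AB(2) lt by (auto simp: field_simps)
  have E: "\<And>w. a \<le> w \<Longrightarrow> w \<le> b \<Longrightarrow> Fl lam n w = Hf lam (Fl lam k) A B w"
  proof -
    fix w assume "a \<le> w" "w \<le> b"
    then show "Fl lam n w = Hf lam (Fl lam k) A B w"
      unfolding Suc using Fl_Suc_eq[OF AB(1), of w lam] sub by linarith
  qed
  have I: "\<exists>y0 y1. \<forall>w. a \<le> w \<longrightarrow> w \<le> b \<longrightarrow> Hf lam (Fl lam k) A B w = interp a y0 b y1 w"
    using AB(2)
  proof (elim disjE)
    assume h: "(a,b) = (A, A+(B-A)/3)"
    then have "\<forall>w. a \<le> w \<longrightarrow> w \<le> b \<longrightarrow> Hf lam (Fl lam k) A B w = interp a (Fl lam k A) b (Fl lam k (A+(B-A)/3)) w"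
      using Hf_p1[OF lt] by auto
    then show ?thesis by blast
  next
    assume h: "(a,b) = (A+(B-A)/3, A+(B-A)/2)"
    then have "\<forall>w. a \<le> w \<longrightarrow> w \<le> b \<longrightarrow> Hf lam (Fl lam k) A B w = interp a (Fl lam k (A+(B-A)/3)) b (Y2 lam (Fl lam k) A B) w"
      using Hf_p2[OF lt] by auto
    then show ?thesis by blast
  next
    assume h: "(a,b) = (A+(B-A)/2, A+2*(B-A)/3)"
    then have "\<forall>w. a \<le> w \<longrightarrow> w \<le> b \<longrightarrow> Hf lam (Fl lam k) A B w = interp a (Y2 lam (Fl lam k) A B) b (Fl lam k (A+2*(B-A)/3)) w"
      using Hf_p3[OF lt] by auto
    then show ?thesis by blast
  next
    assume h: "(a,b) = (A+2*(B-A)/3, B)"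
    then have "\<forall>w. a \<le> w \<longrightarrow> w \<le> b \<longrightarrow> Hf lam (Fl lam k) A B w = interp a (Fl lam k (A+2*(B-A)/3)) b (Fl lam k B) w"
      using Hf_p4[OF lt] by auto
    then show ?thesis by blast
  qed
  then obtain y0 y1 where I: "\<And>w. a \<le> w \<Longrightarrow> w \<le> b \<Longrightarrow> Hf lam (Fl lam k) A B w = interp a y0 b y1 w"
    by blast
  have "\<And>w. a \<le> w \<Longrightarrow> w \<le> b \<Longrightarrow> Fl lam n w = interp a y0 b y1 w" using E I by simp
  from interp_self[OF ab this assms(2,3)] show ?thesis unfolding sl_def .
qed

lemma child_vals:
  fixes lam :: real
  assumes "(A,B) \<in> Ivs n"
  defines "m \<equiv> sl lam n A B" and "l \<equiv> B - A"
  shows "Fl lam (Suc n) A = Fl lam n A"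
    "Fl lam (Suc n) (A+(B-A)/3) = Fl lam n A + m * l / 3"
    "Fl lam (Suc n) (A+(B-A)/2) = Fl lam n A + m * l / 2 + lam * l * sqrt (1 + m\<^sup>2)"
    "Fl lam (Suc n) (A+2*(B-A)/3) = Fl lam n A + m * 2 * l / 3"
    "Fl lam (Suc n) B = Fl lam n A + m * l"
proof -
  have lt: "A < B" using Ivs_lt[OF assms(1)] .
  have aff: "\<And>z. A \<le> z \<Longrightarrow> z \<le> B \<Longrightarrow> Fl lam n z = Fl lam n A + m * (z - A)"
    using Fl_affine[OF assms(1)] unfolding m_def by blast
  have le: "A \<le> A+(B-A)/3" "A+(B-A)/3 \<le> A+(B-A)/2" "A+(B-A)/2 \<le> A+2*(B-A)/3" "A+2*(B-A)/3 \<le> B"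
    using lt by (auto simp: field_simps)
  have le2: "A+(B-A)/3 \<le> B" "A \<le> A+(B-A)/2" "A+(B-A)/2 \<le> B" "A \<le> A+2*(B-A)/3"
    using lt by (auto simp: field_simps)
  have ne: "A+(B-A)/3 \<noteq> A" "A+(B-A)/2 \<noteq> A+(B-A)/3" "A+2*(B-A)/3 \<noteq> A+(B-A)/2"
    using lt by (auto simp: field_simps)
  show "Fl lam (Suc n) A = Fl lam n A"
    using Fl_Suc_eq[OF assms(1), of A] lt Hf_a by simp
  have "Fl lam (Suc n) (A+(B-A)/3) = Hf lam (Fl lam n) A B (A+(B-A)/3)"
    by (rule Fl_Suc_eq[OF assms(1) le(1) le2(1)])
  also have "\<dots> = Fl lam n (A+(B-A)/3)" using Hf_p1[OF lt order.refl] ne(1) by (simp add: interp_right)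
  also have "\<dots> = Fl lam n A + m * l / 3" using aff[OF le(1) le2(1)] unfolding l_def by simp
  finally show "Fl lam (Suc n) (A+(B-A)/3) = Fl lam n A + m * l / 3" .
  have "Fl lam (Suc n) (A+(B-A)/2) = Hf lam (Fl lam n) A B (A+(B-A)/2)"
    by (rule Fl_Suc_eq[OF assms(1) le2(2) le2(3)])
  also have "\<dots> = Y2 lam (Fl lam n) A B" using Hf_p2[OF lt le(2) order.refl] ne(2) by (simp add: interp_right)
  also have "\<dots> = Fl lam n A + m * l / 2 + lam * l * sqrt (1 + m\<^sup>2)"
    using aff[OF le2(2) le2(3)] aff[OF lt[THEN less_imp_le] order.refl] unfolding Y2_def l_def m_def sl_def by simp
  finally show "Fl lam (Suc n) (A+(B-A)/2) = Fl lam n A + m * l / 2 + lam * l * sqrt (1 + m\<^sup>2)" .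
  have "Fl lam (Suc n) (A+2*(B-A)/3) = Hf lam (Fl lam n) A B (A+2*(B-A)/3)"
    by (rule Fl_Suc_eq[OF assms(1) le2(4) le(4)])
  also have "\<dots> = Fl lam n (A+2*(B-A)/3)" using Hf_p3[OF lt le(3) order.refl] ne(3) by (simp add: interp_right)
  also have "\<dots> = Fl lam n A + m * 2 * l / 3" using aff[OF le2(4) le(4)] unfolding l_def by simp
  finally show "Fl lam (Suc n) (A+2*(B-A)/3) = Fl lam n A + m * 2 * l / 3" .
  have "Fl lam (Suc n) B = Fl lam n B"
    using Fl_Suc_eq[OF assms(1), of B] lt Hf_b by simp
  also have "\<dots> = Fl lam n A + m * l" using aff[OF lt[THEN less_imp_le] order.refl] unfolding l_def by simp
  finally show "Fl lam (Suc n) B = Fl lam n A + m * l" .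
qed

lemma child_slopes:
  fixes lam :: real
  assumes "(A,B) \<in> Ivs n"
  defines "m \<equiv> sl lam n A B"
  shows "sl lam (Suc n) A (A+(B-A)/3) = m"
    "sl lam (Suc n) (A+(B-A)/3) (A+(B-A)/2) = m + 6 * lam * sqrt (1 + m\<^sup>2)"
    "sl lam (Suc n) (A+(B-A)/2) (A+2*(B-A)/3) = m - 6 * lam * sqrt (1 + m\<^sup>2)"
    "sl lam (Suc n) (A+2*(B-A)/3) B = m"
proof -
  have lt: "A < B" using Ivs_lt[OF assms(1)] .
  note V = child_vals[OF assms(1), of lam, folded m_def]
  show "sl lam (Suc n) A (A+(B-A)/3) = m" unfolding sl_def V using lt by (simp add: field_simps)
  show "sl lam (Suc n) (A+(B-A)/3) (A+(B-A)/2) = m + 6 * lam * sqrt (1 + m\<^sup>2)"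
    unfolding sl_def V using lt by (simp add: field_simps)
  show "sl lam (Suc n) (A+(B-A)/2) (A+2*(B-A)/3) = m - 6 * lam * sqrt (1 + m\<^sup>2)"
    unfolding sl_def V using lt by (simp add: field_simps)
  show "sl lam (Suc n) (A+2*(B-A)/3) B = m" unfolding sl_def V using lt by (simp add: field_simps)
qed

lemma sq_ge: "\<bar>m\<bar> \<le> sqrt (1 + m\<^sup>2)" "1 \<le> sqrt (1 + m\<^sup>2)" "sqrt (1 + m\<^sup>2) \<le> 1 + \<bar>m::real\<bar>"
proof -
  show "\<bar>m\<bar> \<le> sqrt (1 + m\<^sup>2)" by (rule real_le_rsqrt) simp
  show "1 \<le> sqrt (1 + m\<^sup>2)" by (rule real_le_rsqrt) simp
  show "sqrt (1 + m\<^sup>2) \<le> 1 + \<bar>m::real\<bar>"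
    by (rule real_sqrt_le_iff[THEN iffD2, of _ "(1+\<bar>m\<bar>)\<^sup>2", simplified])
       (simp add: power2_eq_square algebra_simps)
qed

lemma lowK_aux:
  fixes m K :: real assumes K: "1 \<le> K"
  shows "sqrt (K\<^sup>2 - 1) \<le> K * sqrt (1 + m\<^sup>2) - \<bar>m\<bar>"
proof -
  define s where "s = sqrt (1 + m\<^sup>2)"
  define t where "t = \<bar>m\<bar>"
  have st: "t \<le> s" "0 \<le> t" unfolding s_def t_def using sq_ge by auto
  have s2: "s\<^sup>2 = 1 + t\<^sup>2" unfolding s_def t_def by simp
  have "1 * s \<le> K * s" using K st by (intro mult_right_mono) auto
  then have pos: "0 \<le> K * s - t" using st by simp
  have "(K * s - t)\<^sup>2 = (K\<^sup>2 - 1) + (K * t - s)\<^sup>2"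
    using s2 by (simp add: power2_eq_square algebra_simps)
  then have "K\<^sup>2 - 1 \<le> (K * s - t)\<^sup>2" by simp
  then have "sqrt (K\<^sup>2 - 1) \<le> sqrt ((K * s - t)\<^sup>2)" by (rule real_sqrt_le_mono)
  then show ?thesis using pos unfolding s_def t_def by simp
qed

lemma lowK:
  fixes m K :: real assumes K: "1 \<le> K"
  shows "sqrt (K\<^sup>2 - 1) \<le> \<bar>m + K * sqrt (1 + m\<^sup>2)\<bar>" "sqrt (K\<^sup>2 - 1) \<le> \<bar>m - K * sqrt (1 + m\<^sup>2)\<bar>"
  using lowK_aux[OF K, of m] abs_ge_self[of "m + K * sqrt (1 + m\<^sup>2)"] abs_ge_minus_self[of "m - K * sqrt (1 + m\<^sup>2)"]
     abs_ge_minus_self[of m] abs_ge_self[of m] by linarith+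

lemma growK:
  fixes m K :: real assumes K: "1 \<le> K"
  shows "(K - 1) * sqrt (1 + m\<^sup>2) \<le> \<bar>m + K * sqrt (1 + m\<^sup>2)\<bar>"
        "(K - 1) * sqrt (1 + m\<^sup>2) \<le> \<bar>m - K * sqrt (1 + m\<^sup>2)\<bar>"
proof -
  define s where "s = sqrt (1 + m\<^sup>2)"
  have h: "\<bar>m\<bar> \<le> s" "0 \<le> s" unfolding s_def using sq_ge(1)[of m] by auto
  have h2: "-s \<le> m" "m \<le> s" using h by linarith+
  have "1 * s \<le> K * s" using K h(2) by (intro mult_right_mono) auto
  then have Ks: "s \<le> K * s" by simp
  have e: "(K - 1) * s = K * s - s" by (simp add: algebra_simps)
  have "(K - 1) * s \<le> \<bar>m + K * s\<bar>" "(K - 1) * s \<le> \<bar>m - K * s\<bar>"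
    unfolding e using h2 Ks abs_ge_self[of "m + K * s"] abs_ge_minus_self[of "m - K * s"] by linarith+
  then show "(K - 1) * sqrt (1 + m\<^sup>2) \<le> \<bar>m + K * sqrt (1 + m\<^sup>2)\<bar>"
        "(K - 1) * sqrt (1 + m\<^sup>2) \<le> \<bar>m - K * sqrt (1 + m\<^sup>2)\<bar>" by (simp_all add: s_def)
qed

lemma upK:
  fixes m K :: real assumes K: "0 \<le> K"
  shows "\<bar>m + K * sqrt (1 + m\<^sup>2)\<bar> \<le> \<bar>m\<bar> + K * (1 + \<bar>m\<bar>)"
        "\<bar>m - K * sqrt (1 + m\<^sup>2)\<bar> \<le> \<bar>m\<bar> + K * (1 + \<bar>m\<bar>)"
proof -
  have "K * sqrt (1 + m\<^sup>2) \<le> K * (1 + \<bar>m\<bar>)" using K sq_ge(3) by (rule mult_left_mono[rotated])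
  moreover have "0 \<le> K * sqrt (1 + m\<^sup>2)" using K by simp
  moreover have "\<bar>m + K * sqrt (1 + m\<^sup>2)\<bar> \<le> \<bar>m\<bar> + \<bar>K * sqrt (1 + m\<^sup>2)\<bar>" by (rule abs_triangle_ineq)
  moreover have "\<bar>m - K * sqrt (1 + m\<^sup>2)\<bar> \<le> \<bar>m\<bar> + \<bar>K * sqrt (1 + m\<^sup>2)\<bar>" by (rule abs_triangle_ineq4)
  ultimately show "\<bar>m + K * sqrt (1 + m\<^sup>2)\<bar> \<le> \<bar>m\<bar> + K * (1 + \<bar>m\<bar>)"
        "\<bar>m - K * sqrt (1 + m\<^sup>2)\<bar> \<le> \<bar>m\<bar> + K * (1 + \<bar>m\<bar>)" by linarith+
qed

lemma Ivs_ne: "Ivs n \<noteq> {}"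
proof (induction n)
  case 0 then show ?case by simp
next
  case (Suc n)
  then obtain a b where "(a,b) \<in> Ivs n" by auto
  then show ?case using Ivs_child(1) by blast
qed

lemma mplus_alt: "mplus lam n = Max ((\<lambda>(a,b). \<bar>sl lam n a b\<bar>) ` Ivs n)"
  unfolding mplus_def sl_def ..

lemma mplus_ge: "(a,b) \<in> Ivs n \<Longrightarrow> \<bar>sl lam n a b\<bar> \<le> mplus lam n"
  unfolding mplus_alt by (rule Max_ge) (auto simp: Ivs_finite)

lemma mplus_le: "(\<And>a b. (a,b) \<in> Ivs n \<Longrightarrow> \<bar>sl lam n a b\<bar> \<le> X) \<Longrightarrow> mplus lam n \<le> X"
  unfolding mplus_alt using Ivs_finite Ivs_ne by (subst Max_le_iff) auto

lemma mplus_in: "\<exists>a b. (a,b) \<in> Ivs n \<and> \<bar>sl lam n a b\<bar> = mplus lam n"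
proof -
  have "mplus lam n \<in> (\<lambda>(a,b). \<bar>sl lam n a b\<bar>) ` Ivs n"
    unfolding mplus_alt using Ivs_finite Ivs_ne by (intro Max_in) auto
  then obtain p where "p \<in> Ivs n" "mplus lam n = (\<lambda>(a,b). \<bar>sl lam n a b\<bar>) p" by blast
  then show ?thesis by (cases p) auto
qed

lemma mplus_0: "mplus lam 0 = 0"
  unfolding mplus_alt by (simp add: sl_def)

lemma mplus_nonneg: "0 \<le> mplus lam n"
proof -
  obtain a b where "(a,b) \<in> Ivs n" "\<bar>sl lam n a b\<bar> = mplus lam n" using mplus_in by blast
  then show ?thesis by auto
qed

lemma slope_inv:
  fixes lam :: real
  assumes lam: "1/6 < lam" and "(a,b) \<in> Ivs n"
  shows "sl lam n a b = 0 \<or> sqrt (36 * lam\<^sup>2 - 1) \<le> \<bar>sl lam n a b\<bar>"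
  using assms(2)
proof (induction n arbitrary: a b)
  case 0 then show ?case by (simp add: sl_def)
next
  case (Suc n)
  from Suc.prems obtain A B where AB: "(A,B) \<in> Ivs n"
    "(a,b) = (A, A+(B-A)/3) \<or> (a,b) = (A+(B-A)/3, A+(B-A)/2) \<or> (a,b) = (A+(B-A)/2, A+2*(B-A)/3) \<or> (a,b) = (A+2*(B-A)/3, B)"
    by (rule Ivs_SucE)
  have K: "1 \<le> 6 * lam" using lam by simp
  have e: "36 * lam\<^sup>2 - 1 = (6 * lam)\<^sup>2 - 1" by (simp add: power2_eq_square)
  note L = lowK[OF K, of "sl lam n A B", folded e]
  note S = child_slopes[OF AB(1), of lam]
  from AB(2) show ?case
    using Suc.IH[OF AB(1)] S L by (elim disjE) (simp_all add: mult.assoc)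
qed

lemma mplus_up:
  assumes "0 \<le> lam"
  shows "mplus lam (Suc n) \<le> mplus lam n + 6 * lam * (1 + mplus lam n)"
proof (rule mplus_le)
  fix a b assume "(a,b) \<in> Ivs (Suc n)"
  then obtain A B where AB: "(A,B) \<in> Ivs n"
    "(a,b) = (A, A+(B-A)/3) \<or> (a,b) = (A+(B-A)/3, A+(B-A)/2) \<or> (a,b) = (A+(B-A)/2, A+2*(B-A)/3) \<or> (a,b) = (A+2*(B-A)/3, B)"
    by (rule Ivs_SucE)
  define m where "m = sl lam n A B"
  have mM: "\<bar>m\<bar> \<le> mplus lam n" unfolding m_def using mplus_ge[OF AB(1)] .
  have K: "0 \<le> 6 * lam" using assms by simp
  have U: "\<bar>m\<bar> + 6 * lam * (1 + \<bar>m\<bar>) \<le> mplus lam n + 6 * lam * (1 + mplus lam n)"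
    using mM K by (intro add_mono mult_left_mono) auto
  have U1: "\<bar>m\<bar> \<le> mplus lam n + 6 * lam * (1 + mplus lam n)"
    using mM K mplus_nonneg[of lam n] by (simp add: add_increasing2)
  note S = child_slopes[OF AB(1), of lam, folded m_def]
  note P = upK[OF K, of m]
  from AB(2) show "\<bar>sl lam (Suc n) a b\<bar> \<le> mplus lam n + 6 * lam * (1 + mplus lam n)"
    using S P U U1 by (elim disjE) (simp_all add: mult.assoc)
qed

lemma mplus_low:
  assumes "0 \<le> lam"
  shows "mplus lam n + 6 * lam * sqrt (1 + (mplus lam n)\<^sup>2) \<le> mplus lam (Suc n)"
proof -
  obtain A B where AB: "(A,B) \<in> Ivs n" "\<bar>sl lam n A B\<bar> = mplus lam n" using mplus_in by blast
  define m where "m = sl lam n A B"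
  note S = child_slopes[OF AB(1), of lam, folded m_def]
  have sq: "sqrt (1 + (mplus lam n)\<^sup>2) = sqrt (1 + m\<^sup>2)" using AB(2) unfolding m_def
    by (metis power2_abs)
  have "0 \<le> 6 * lam * sqrt (1 + m\<^sup>2)" using assms by simp
  show ?thesis
  proof (cases "0 \<le> m")
    case True
    have "mplus lam n + 6 * lam * sqrt (1 + (mplus lam n)\<^sup>2) = \<bar>sl lam (Suc n) (A+(B-A)/3) (A+(B-A)/2)\<bar>"
      using S(2) True AB(2) sq \<open>0 \<le> 6 * lam * sqrt (1 + m\<^sup>2)\<close> unfolding m_def by (simp add: mult.assoc)
    also have "\<dots> \<le> mplus lam (Suc n)" by (rule mplus_ge[OF Ivs_child(2)[OF AB(1)]])
    finally show ?thesis .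
  next
    case False
    have "mplus lam n + 6 * lam * sqrt (1 + (mplus lam n)\<^sup>2) = \<bar>sl lam (Suc n) (A+(B-A)/2) (A+2*(B-A)/3)\<bar>"
      using S(3) False AB(2) sq \<open>0 \<le> 6 * lam * sqrt (1 + m\<^sup>2)\<close> unfolding m_def by (simp add: mult.assoc)
    also have "\<dots> \<le> mplus lam (Suc n)" by (rule mplus_ge[OF Ivs_child(3)[OF AB(1)]])
    finally show ?thesis .
  qed
qed

lemma mplus_upper:
  assumes "0 \<le> lam"
  shows "mplus lam n + 1 \<le> (6 * lam + 1) ^ n"
proof (induction n)
  case 0 then show ?case by (simp add: mplus_0)
next
  case (Suc n)
  have "mplus lam (Suc n) + 1 \<le> mplus lam n + 6 * lam * (1 + mplus lam n) + 1"
    using mplus_up[OF assms, of n] by simp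
  also have "\<dots> = (6 * lam + 1) * (mplus lam n + 1)" by (simp add: algebra_simps)
  also have "\<dots> \<le> (6 * lam + 1) * (6 * lam + 1) ^ n"
    using Suc.IH assms by (intro mult_left_mono) auto
  finally show ?case by simp
qed

lemma mplus_lower:
  assumes "0 \<le> lam" "1 \<le> n"
  shows "6 * lam / (6 * lam + 1) * (6 * lam + 1) ^ n \<le> mplus lam n"
  using assms(2)
proof (induction n rule: dec_induct)
  case base
  have "mplus lam 0 + 6 * lam * sqrt (1 + (mplus lam 0)\<^sup>2) \<le> mplus lam (Suc 0)"
    by (rule mplus_low[OF assms(1)])
  then show ?case using assms(1) by (simp add: mplus_0)
next
  case (step n)
  let ?M = "mplus lam n"
  have "?M \<le> sqrt (1 + ?M\<^sup>2)" using sq_ge(1)[of ?M] by simp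
  then have "6 * lam * ?M \<le> 6 * lam * sqrt (1 + ?M\<^sup>2)" using assms(1) by (intro mult_left_mono) auto
  then have "(6 * lam + 1) * ?M \<le> mplus lam (Suc n)" using mplus_low[OF assms(1), of n]
    by (simp add: algebra_simps)
  moreover have "(6 * lam + 1) * (6 * lam / (6 * lam + 1) * (6 * lam + 1) ^ n) \<le> (6 * lam + 1) * ?M"
    using step.IH assms(1) by (intro mult_left_mono) auto
  moreover have "6 * lam / (6 * lam + 1) * (6 * lam + 1) ^ Suc n = (6 * lam + 1) * (6 * lam / (6 * lam + 1) * (6 * lam + 1) ^ n)"
    by (simp only: power_Suc mult_ac)
  ultimately show ?case by linarith
qed

lemma part2:
  assumes "1/6 < lam"
  shows "\<exists>c C. 0 < c \<and> c \<le> C \<and>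
            (\<forall>n\<ge>1. c * (6 * lam + 1) ^ n \<le> mplus lam n \<and> mplus lam n \<le> C * (6 * lam + 1) ^ n)"
proof (intro exI conjI allI impI)
  show "0 < 6 * lam / (6 * lam + 1)" using assms by simp
  show "6 * lam / (6 * lam + 1) \<le> 1" using assms by simp
  fix n :: nat assume "1 \<le> n"
  show "6 * lam / (6 * lam + 1) * (6 * lam + 1) ^ n \<le> mplus lam n"
    using mplus_lower[OF _ \<open>1 \<le> n\<close>] assms by simp
  show "mplus lam n \<le> 1 * (6 * lam + 1) ^ n"
    using mplus_upper[of lam n] assms by simp
qed

definition chstep :: "nat \<Rightarrow> real \<times> real \<times> bool \<Rightarrow> real \<times> real \<times> bool" where
  "chstep d t = (case t of (a, b, ori) \<Rightarrow>
     if ori then (if d = 0 then (a, a+(b-a)/3, True) else if d = 1 then (a+(b-a)/3, a+(b-a)/2, True)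
                  else if d = 2 then (a+(b-a)/2, a+2*(b-a)/3, False) else (a+2*(b-a)/3, b, True))
     else (if d = 0 then (a+2*(b-a)/3, b, False) else if d = 1 then (a+(b-a)/2, a+2*(b-a)/3, False)
                  else if d = 2 then (a+(b-a)/3, a+(b-a)/2, True) else (a, a+(b-a)/3, False)))"

primrec chain :: "real \<Rightarrow> nat \<Rightarrow> real \<times> real \<times> bool" where
  "chain x 0 = (0, 1, True)"
| "chain x (Suc n) = chstep (digit n x) (chain x n)"

lemma Tmap_range: "0 \<le> y \<Longrightarrow> y \<le> 1 \<Longrightarrow> 0 \<le> Tmap y \<and> Tmap y \<le> 1"
  unfolding Tmap_def by auto

lemma chain_inv:
  assumes "0 \<le> x" "x \<le> 1"
  shows "chain x n = (a, b, ori) \<Longrightarrow> (a, b) \<in> Ivs n \<and> 0 \<le> (Tmap^^n) x \<and> (Tmap^^n) x \<le> 1 \<and>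
     x = (if ori then a + (b - a) * (Tmap^^n) x else b - (b - a) * (Tmap^^n) x)"
proof (induction n arbitrary: a b ori)
  case 0 then show ?case using assms by auto
next
  case (Suc n)
  obtain A B ob where c: "chain x n = (A, B, ob)" by (cases "chain x n") auto
  define y where "y = (Tmap^^n) x"
  from Suc.IH[OF c] have I: "(A,B) \<in> Ivs n" "0 \<le> y" "y \<le> 1"
    "x = (if ob then A + (B - A) * y else B - (B - A) * y)" unfolding y_def by auto
  have Ty: "(Tmap^^Suc n) x = Tmap y" unfolding y_def by simp
  have d: "digit n x = Umap y" unfolding digit_def y_def ..
  have ch: "(a, b, ori) = chstep (Umap y) (A, B, ob)" using Suc.prems c d by simp
  note C = Ivs_child[OF I(1)]
  have R: "0 \<le> Tmap y \<and> Tmap y \<le> 1" using Tmap_range[OF I(2,3)] .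
  consider (c1) "y < 1/3" | (c2) "1/3 \<le> y \<and> y < 1/2" | (c3) "1/2 \<le> y \<and> y < 2/3" | (c4) "2/3 \<le> y" by linarith
  then show ?case
  proof cases
    case c1
    have u: "Umap y = 0" "Tmap y = 3 * y" using c1 by (auto simp: Umap_def Tmap_def)
    show ?thesis
    proof (cases ob)
      case True
      then have x: "x = A + (B - A) * y" using I(4) by simp
      have eqs: "a = A" "b = A+(B-A)/3" "ori = True" using ch True u by (simp_all add: chstep_def)
      have m: "(a,b) \<in> Ivs (Suc n)" using C(1) eqs by simp
      have q: "x = (if ori then a + (b - a) * Tmap y else b - (b - a) * Tmap y)"
        unfolding eqs u x by (simp add: field_simps)
      show ?thesis unfolding Ty using m q R by blast
    next
      case False
      then have x: "x = B - (B - A) * y" using I(4) by simp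
      have eqs: "a = A+2*(B-A)/3" "b = B" "ori = False" using ch False u by (simp_all add: chstep_def)
      have m: "(a,b) \<in> Ivs (Suc n)" using C(4) eqs by simp
      have q: "x = (if ori then a + (b - a) * Tmap y else b - (b - a) * Tmap y)"
        unfolding eqs u x by (simp add: field_simps)
      show ?thesis unfolding Ty using m q R by blast
    qed
  next
    case c2
    have u: "Umap y = 1" "Tmap y = 6 * y - 2" using c2 by (auto simp: Umap_def Tmap_def)
    show ?thesis
    proof (cases ob)
      case True
      then have x: "x = A + (B - A) * y" using I(4) by simp
      have eqs: "a = A+(B-A)/3" "b = A+(B-A)/2" "ori = True" using ch True u by (simp_all add: chstep_def)
      have m: "(a,b) \<in> Ivs (Suc n)" using C(2) eqs by simp
      have q: "x = (if ori then a + (b - a) * Tmap y else b - (b - a) * Tmap y)"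
        unfolding eqs u x by (simp add: field_simps)
      show ?thesis unfolding Ty using m q R by blast
    next
      case False
      then have x: "x = B - (B - A) * y" using I(4) by simp
      have eqs: "a = A+(B-A)/2" "b = A+2*(B-A)/3" "ori = False" using ch False u by (simp_all add: chstep_def)
      have m: "(a,b) \<in> Ivs (Suc n)" using C(3) eqs by simp
      have q: "x = (if ori then a + (b - a) * Tmap y else b - (b - a) * Tmap y)"
        unfolding eqs u x by (simp add: field_simps)
      show ?thesis unfolding Ty using m q R by blast
    qed
  next
    case c3
    have u: "Umap y = 2" "Tmap y = 4 - 6 * y" using c3 by (auto simp: Umap_def Tmap_def)
    show ?thesis
    proof (cases ob)
      case True
      then have x: "x = A + (B - A) * y" using I(4) by simp
      have eqs: "a = A+(B-A)/2" "b = A+2*(B-A)/3" "ori = False" using ch True u by (simp_all add: chstep_def)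
      have m: "(a,b) \<in> Ivs (Suc n)" using C(3) eqs by simp
      have q: "x = (if ori then a + (b - a) * Tmap y else b - (b - a) * Tmap y)"
        unfolding eqs u x by (simp add: field_simps)
      show ?thesis unfolding Ty using m q R by blast
    next
      case False
      then have x: "x = B - (B - A) * y" using I(4) by simp
      have eqs: "a = A+(B-A)/3" "b = A+(B-A)/2" "ori = True" using ch False u by (simp_all add: chstep_def)
      have m: "(a,b) \<in> Ivs (Suc n)" using C(2) eqs by simp
      have q: "x = (if ori then a + (b - a) * Tmap y else b - (b - a) * Tmap y)"
        unfolding eqs u x by (simp add: field_simps)
      show ?thesis unfolding Ty using m q R by blast
    qed
  next
    case c4
    have u: "Umap y = 3" "Tmap y = 3 * y - 2" using c4 by (auto simp: Umap_def Tmap_def)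
    show ?thesis
    proof (cases ob)
      case True
      then have x: "x = A + (B - A) * y" using I(4) by simp
      have eqs: "a = A+2*(B-A)/3" "b = B" "ori = True" using ch True u by (simp_all add: chstep_def)
      have m: "(a,b) \<in> Ivs (Suc n)" using C(4) eqs by simp
      have q: "x = (if ori then a + (b - a) * Tmap y else b - (b - a) * Tmap y)"
        unfolding eqs u x by (simp add: field_simps)
      show ?thesis unfolding Ty using m q R by blast
    next
      case False
      then have x: "x = B - (B - A) * y" using I(4) by simp
      have eqs: "a = A" "b = A+(B-A)/3" "ori = False" using ch False u by (simp_all add: chstep_def)
      have m: "(a,b) \<in> Ivs (Suc n)" using C(1) eqs by simp
      have q: "x = (if ori then a + (b - a) * Tmap y else b - (b - a) * Tmap y)"
        unfolding eqs u x by (simp add: field_simps)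
      show ?thesis unfolding Ty using m q R by blast
    qed
  qed
qed

lemma funpow_fix: "f z = z \<Longrightarrow> (f^^k) z = z"
  by (induction k) auto

lemma funpow_from: "n \<le> k \<Longrightarrow> (f^^k) x = (f^^(k-n)) ((f^^n) x)"
  by (metis funpow_add le_add_diff_inverse2 o_apply)

lemma notE_interior:
  assumes "x \<notin> Eset" "0 \<le> (Tmap^^n) x" "(Tmap^^n) x \<le> 1"
  shows "0 < (Tmap^^n) x \<and> (Tmap^^n) x < 1"
proof (rule ccontr)
  assume "\<not> ?thesis"
  then have "(Tmap^^n) x = 0 \<or> (Tmap^^n) x = 1" using assms(2,3) by linarith
  then show False
  proof
    assume h: "(Tmap^^n) x = 0"
    have "\<forall>k\<ge>n. digit k x = 0"
    proof (intro allI impI)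
      fix k assume "n \<le> k"
      then have "(Tmap^^k) x = 0" using funpow_from[of n k Tmap x] h funpow_fix[of Tmap 0]
        by (simp add: Tmap_def)
      then show "digit k x = 0" unfolding digit_def by (simp add: Umap_def)
    qed
    then have "x \<in> Eset" unfolding Eset_def by blast
    then show False using assms(1) by blast
  next
    assume h: "(Tmap^^n) x = 1"
    have "\<forall>k\<ge>n. digit k x = 3"
    proof (intro allI impI)
      fix k assume "n \<le> k"
      then have "(Tmap^^k) x = 1" using funpow_from[of n k Tmap x] h funpow_fix[of Tmap 1]
        by (simp add: Tmap_def)
      then show "digit k x = 3" unfolding digit_def by (simp add: Umap_def)
    qed
    then have "x \<in> Eset" unfolding Eset_def by blast
    then show False using assms(1) by blast
  qed
qed

lemma chain_interior:
  assumes "0 \<le> x" "x \<le> 1" "x \<notin> Eset" "chain x n = (a, b, ori)"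
  shows "(a,b) \<in> Ivs n \<and> a < x \<and> x < b"
proof -
  note I = chain_inv[OF assms(1,2,4)]
  have ab: "a < b" using Ivs_lt I by blast
  have y: "0 < (Tmap^^n) x \<and> (Tmap^^n) x < 1" using notE_interior[OF assms(3)] I by blast
  define y where "y = (Tmap^^n) x"
  have y': "0 < y" "y < 1" using y unfolding y_def by auto
  have p: "0 < (b - a) * y" "(b - a) * y < b - a" using ab y' by (auto intro: mult_pos_pos)
  show ?thesis using I p unfolding y_def[symmetric] by (cases ori) auto
qed

lemma slope_at:
  assumes "(a,b) \<in> Ivs n" "a < x" "x < b"
  shows "slope_m lam n x = sl lam n a b"
proof -
  let ?g = "\<lambda>z. Fl lam n a + sl lam n a b * (z - a)"
  have d: "(?g has_field_derivative sl lam n a b) (at x)"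
    by (auto intro!: derivative_eq_intros)
  have "(Fl lam n has_field_derivative sl lam n a b) (at x)"
  proof (rule has_field_derivative_transform_within_open[OF d, of "{a<..<b}"])
    show "open {a<..<b}" by simp
    show "x \<in> {a<..<b}" using assms by simp
    fix z assume "z \<in> {a<..<b}"
    then have "a \<le> z" "z \<le> b" by auto
    from Fl_affine[OF assms(1) this, of lam] show "?g z = Fl lam n z" by (rule sym)
  qed
  then show ?thesis unfolding slope_m_def by (rule DERIV_imp_deriv)
qed

lemma beta12_Suc: "beta12 x (Suc n) = beta12 x n + (if digit n x \<in> {1,2} then 1 else 0)"
proof -
  have fin: "finite {k. k < n \<and> digit k x \<in> {1,2}}" by simp
  show ?thesis
  proof (cases "digit n x \<in> {1,2}")
    case True
    then have "{k. k < Suc n \<and> digit k x \<in> {1,2}} = insert n {k. k < n \<and> digit k x \<in> {1,2}}"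
      by (auto simp: less_Suc_eq)
    then show ?thesis unfolding beta12_def using True fin by (simp add: card_insert_disjoint)
  next
    case False
    then have "{k. k < Suc n \<and> digit k x \<in> {1,2}} = {k. k < n \<and> digit k x \<in> {1,2}}"
      by (auto simp: less_Suc_eq)
    then show ?thesis unfolding beta12_def using False by simp
  qed
qed

lemma Eset_sub: "Eset \<subseteq> Etilde"
proof
  fix x assume "x \<in> Eset"
  then obtain N where N: "(\<forall>k\<ge>N. digit k x = 0) \<or> (\<forall>k\<ge>N. digit k x = 3)" unfolding Eset_def by blast
  have "\<forall>k\<ge>N. digit k x \<notin> {1,2}" using N by auto
  then have "\<forall>k\<ge>N. beta12 x k = beta12 x N"
  proof (intro allI impI)
    fix k assume h: "\<forall>k\<ge>N. digit k x \<notin> {1,2}" and "N \<le> k"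
    from \<open>N \<le> k\<close> show "beta12 x k = beta12 x N"
      using h by (induction k rule: dec_induct) (simp, metis beta12_Suc add_0_right le_SucI)
  qed
  then show "x \<in> Etilde" unfolding Etilde_def by blast
qed

lemma beta_mono: "n \<le> k \<Longrightarrow> beta12 x n \<le> beta12 x k"
  by (induction k rule: dec_induct) (auto simp: beta12_Suc)

lemma beta_unbounded:
  assumes "x \<notin> Etilde"
  shows "\<exists>N. B \<le> beta12 x N"
proof (induction B)
  case 0 then show ?case by simp
next
  case (Suc B)
  then obtain N where N: "B \<le> beta12 x N" by blast
  from assms obtain k where "k \<ge> N" "beta12 x k \<noteq> beta12 x N" unfolding Etilde_def by blast
  then have "beta12 x N < beta12 x k" using beta_mono[of N k x] by simp
  then show ?case using N by (intro exI[of _ k]) simp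
qed

lemma chain_slope:
  fixes lam :: real
  assumes "0 \<le> x" "x \<le> 1" "chain x n = (a, b, ori)" "chain x (Suc n) = (a', b', ori')" "1/6 \<le> lam"
  shows "digit n x \<in> {1,2} \<Longrightarrow> (6 * lam - 1) * sqrt (1 + (sl lam n a b)\<^sup>2) \<le> \<bar>sl lam (Suc n) a' b'\<bar>"
    and "digit n x \<notin> {1,2} \<Longrightarrow> sl lam (Suc n) a' b' = sl lam n a b"
proof -
  have ab: "(a,b) \<in> Ivs n" using chain_inv[OF assms(1,2,3)] by blast
  have e: "(a', b', ori') = chstep (digit n x) (a, b, ori)" using assms(3,4) by simp
  note S = child_slopes[OF ab, of lam]
  have K: "1 \<le> 6 * lam" using assms(5) by simp
  note G = growK[OF K, of "sl lam n a b"]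
  show "digit n x \<in> {1,2} \<Longrightarrow> (6 * lam - 1) * sqrt (1 + (sl lam n a b)\<^sup>2) \<le> \<bar>sl lam (Suc n) a' b'\<bar>"
  proof -
    assume d: "digit n x \<in> {1,2}"
    then consider "digit n x = 1" | "digit n x = 2" by blast
    then show ?thesis
    proof cases
      case 1
      then show ?thesis using e S G by (cases ori) (simp_all add: chstep_def mult.assoc)
    next
      case 2
      then show ?thesis using e S G by (cases ori) (simp_all add: chstep_def mult.assoc)
    qed
  qed
  show "digit n x \<notin> {1,2} \<Longrightarrow> sl lam (Suc n) a' b' = sl lam n a b"
  proof -
    assume d: "digit n x \<notin> {1,2}"
    then consider "digit n x = 0" | "digit n x \<noteq> 0 \<and> digit n x \<noteq> 1 \<and> digit n x \<noteq> 2" by blast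
    then show ?thesis
    proof cases
      case 1
      then show ?thesis using e S by (cases ori) (simp_all add: chstep_def)
    next
      case 2
      then show ?thesis using e S by (cases ori) (simp_all add: chstep_def)
    qed
  qed
qed

lemma growth:
  fixes lam :: real
  assumes lam: "1/3 < lam" and x: "0 \<le> x" "x \<le> 1"
  shows "0 < beta12 x n \<Longrightarrow> (6 * lam - 1) ^ (beta12 x n - 1) \<le>
           \<bar>sl lam n (fst (chain x n)) (fst (snd (chain x n)))\<bar>"
proof (induction n)
  case 0 then show ?case by (simp add: beta12_def)
next
  case (Suc n)
  obtain a b ori where c: "chain x n = (a, b, ori)" by (cases "chain x n") auto
  obtain a' b' ori' where c': "chain x (Suc n) = (a', b', ori')" by (cases "chain x (Suc n)") auto
  define m where "m = sl lam n a b"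
  define \<rho> where "\<rho> = 6 * lam - 1"
  have \<rho>: "1 \<le> \<rho>" using lam unfolding \<rho>_def by simp
  have l6: "1/6 \<le> lam" using lam by simp
  note CS = chain_slope[OF x c c' l6]
  have sq: "\<bar>m\<bar> \<le> sqrt (1 + m\<^sup>2)" "1 \<le> sqrt (1 + m\<^sup>2)" using sq_ge by auto
  show ?case
  proof (cases "digit n x \<in> {1,2}")
    case True
    have B: "beta12 x (Suc n) = beta12 x n + 1" using True by (simp add: beta12_Suc)
    have G: "\<rho> * sqrt (1 + m\<^sup>2) \<le> \<bar>sl lam (Suc n) a' b'\<bar>" using CS(1)[OF True] unfolding m_def \<rho>_def .
    show ?thesis
    proof (cases "beta12 x n = 0")
      case True
      have "\<rho> * 1 \<le> \<rho> * sqrt (1 + m\<^sup>2)" using sq \<rho> by (intro mult_left_mono) auto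
      then have "1 \<le> \<bar>sl lam (Suc n) a' b'\<bar>" using G \<rho> by linarith
      then show ?thesis using B True c' by simp
    next
      case False
      then have IH: "\<rho> ^ (beta12 x n - 1) \<le> \<bar>m\<bar>" using Suc.IH c unfolding m_def \<rho>_def by simp
      have "\<rho> ^ (beta12 x (Suc n) - 1) = \<rho> * \<rho> ^ (beta12 x n - 1)"
        using B False by (simp add: power_Suc[symmetric])
      also have "\<dots> \<le> \<rho> * sqrt (1 + m\<^sup>2)" using IH sq \<rho> by (intro mult_left_mono) auto
      finally show ?thesis using G c' unfolding \<rho>_def by simp
    qed
  next
    case False
    have B: "beta12 x (Suc n) = beta12 x n" using False by (simp add: beta12_Suc)
    show ?thesis using Suc.IH Suc.prems B CS(2)[OF False] c c' by simp
  qed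
qed

lemma part3:
  fixes lam :: real
  assumes lam: "1/3 < lam" and x: "x \<in> {0..1} - Etilde"
  shows "filterlim (\<lambda>n. \<bar>slope_m lam n x\<bar>) at_top sequentially"
proof -
  have x01: "0 \<le> x" "x \<le> 1" and xE: "x \<notin> Etilde" using x by auto
  have xE': "x \<notin> Eset" using xE Eset_sub by blast
  define \<rho> where "\<rho> = 6 * lam - 1"
  have \<rho>: "1 < \<rho>" using lam unfolding \<rho>_def by simp
  have eqsl: "\<bar>slope_m lam n x\<bar> = \<bar>sl lam n (fst (chain x n)) (fst (snd (chain x n)))\<bar>" for n
  proof -
    obtain a b ori where c: "chain x n = (a, b, ori)" by (cases "chain x n") auto
    from chain_interior[OF x01 xE' c] have "(a,b) \<in> Ivs n" "a < x" "x < b" by auto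
    from slope_at[OF this] show ?thesis using c by simp
  qed
  show ?thesis
  proof (subst filterlim_at_top, intro allI)
    fix Z :: real
    obtain B where B: "Z < \<rho> ^ B" using real_arch_pow[OF \<rho>] by blast
    obtain N where N: "Suc B \<le> beta12 x N" using beta_unbounded[OF xE] by blast
    show "eventually (\<lambda>n. Z \<le> \<bar>slope_m lam n x\<bar>) sequentially"
      unfolding eventually_sequentially
    proof (intro exI allI impI)
      fix n assume "N \<le> n"
      then have bn: "Suc B \<le> beta12 x n" using N beta_mono[of N n x] by simp
      have "\<rho> ^ B \<le> \<rho> ^ (beta12 x n - 1)" using bn \<rho> by (intro power_increasing) auto
      also have "\<dots> \<le> \<bar>slope_m lam n x\<bar>" using growth[OF lam x01, of n] bn eqsl[of n] unfolding \<rho>_def by simp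
      finally show "Z \<le> \<bar>slope_m lam n x\<bar>" using B by simp
    qed
  qed
qed

lemma part1:
  fixes lam :: real
  assumes lam: "1/6 < lam" and x: "x \<in> {0..1} - Eset" and "slope_m lam n x \<noteq> 0"
  shows "sqrt (36 * lam\<^sup>2 - 1) \<le> \<bar>slope_m lam n x\<bar> \<and> \<bar>slope_m lam n x\<bar> \<le> mplus lam n"
proof -
  have x01: "0 \<le> x" "x \<le> 1" and xE: "x \<notin> Eset" using x by auto
  obtain a b ori where c: "chain x n = (a, b, ori)" by (cases "chain x n") auto
  from chain_interior[OF x01 xE c] have "(a,b) \<in> Ivs n" "a < x" "x < b" by auto
  moreover from slope_at[OF this] have "slope_m lam n x = sl lam n a b" .
  ultimately show ?thesis using slope_inv[OF lam] mplus_ge assms(3) by metis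
qed

theorem lemma3p5:
  fixes lam :: real
  assumes "1/6 < lam" and "lam < 5/6"
  shows "(\<forall>x \<in> {0..1} - Eset. \<forall>n\<ge>1. slope_m lam n x \<noteq> 0 \<longrightarrow>
            sqrt (36 * lam\<^sup>2 - 1) \<le> \<bar>slope_m lam n x\<bar> \<and> \<bar>slope_m lam n x\<bar> \<le> mplus lam n)
       \<and> (\<exists>c C. 0 < c \<and> c \<le> C \<and>
            (\<forall>n\<ge>1. c * (6 * lam + 1) ^ n \<le> mplus lam n \<and> mplus lam n \<le> C * (6 * lam + 1) ^ n))
       \<and> (lam > 1/3 \<longrightarrow> (\<forall>x \<in> {0..1} - Etilde.
            filterlim (\<lambda>n. \<bar>slope_m lam n x\<bar>) at_top sequentially))"
  using part1[OF assms(1)] part2[OF assms(1)] part3 by blast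

end
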